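(* Let $X,X_1,X_2,X_3,X_{12},X_{13},X_{23},X_{123}$ be eight points in the plane, forming a combinatorial cube. For $\{i,j,k\}=\{1,2,3\}$, the pair of opposite faces $XX_iX_{ij}X_j$ and $X_kX_{ik}X_{ijk}X_{jk}$ has four pairs of corresponding edges $(XX_i,\,X_kX_{ik})$, $(X_iX_{ij},\,X_{ik}X_{ijk})$, $(X_jX_{ij},\,X_{jk}X_{ijk})$, $(XX_j,\,X_kX_{jk})$, whose (lines') intersection points are four points. If, for some pair of opposite faces, these four intersection points of corresponding edges are collinear, then the same is true for every other pair of opposite faces.
   Context: Subscripts are unordered, so $X_{ij}=X_{ji}$ and $X_{ijk}=X_{123}$. The vertices of the combinatorial cube are indexed by subsets of $\{1,2,3\}$; edges join vertices whose index sets differ by one element, and faces are the quadrilaterals $XX_iX_{ij}X_j$ and $X_kX_{ik}X_{ijk}X_{jk}$. An edge is identified with the line through its two endpoints. The points are assumed to be in general position so that all the lines and intersection points involved are well defined. *)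

theory Defs
  imports "HOL-Analysis.Analysis"
begin

type_synonym point = "real ^ 2"

text \<open>Vertices of the combinatorial cube are indexed by subsets of {1,2,3}.
  The line of an edge is the affine hull of its two endpoints; the intersection
  point of two lines is the (unique, by general position) common point.\<close>

definition meet :: "point \<Rightarrow> point \<Rightarrow> point \<Rightarrow> point \<Rightarrow> point" where
  "meet a b c d = (THE x. x \<in> affine hull {a, b} \<inter> affine hull {c, d})"

definition cube_general_position :: "(nat set \<Rightarrow> point) \<Rightarrow> bool" where
  "cube_general_position P \<longleftrightarrow>
     (\<forall>A m. A \<subseteq> {1,2,3} \<and> m \<in> {1,2,3} \<and> m \<notin> A \<longrightarrow> P A \<noteq> P (insert m A)) \<and>
     (\<forall>A m k. A \<subseteq> {1,2,3} \<and> m \<in> {1,2,3} \<and> k \<in> {1,2,3} \<and> m \<notin> A \<and> k \<notin> A \<and> m \<noteq> k \<longrightarrow>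
        (\<exists>!x. x \<in> affine hull {P A, P (insert m A)} \<inter>
                affine hull {P (insert k A), P (insert k (insert m A))}))"

definition opp_faces_collinear :: "(nat set \<Rightarrow> point) \<Rightarrow> nat \<Rightarrow> nat \<Rightarrow> nat \<Rightarrow> bool" where
  "opp_faces_collinear P i j k \<longleftrightarrow>
     collinear {meet (P {}) (P {i}) (P {k}) (P {i,k}),
                meet (P {i}) (P {i,j}) (P {i,k}) (P {i,j,k}),
                meet (P {j}) (P {i,j}) (P {j,k}) (P {i,j,k}),
                meet (P {}) (P {j}) (P {k}) (P {j,k})}"

end

theory Submission imports Defs begin

definition det2 :: "real^2 \<Rightarrow> real^2 \<Rightarrow> real" where
  "det2 u v = u$1 * v$2 - u$2 * v$1"

definition onl :: "real^2 \<Rightarrow> real^2 \<Rightarrow> real^2 \<Rightarrow> bool" where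
  "onl x a b \<longleftrightarrow> (\<exists>t. x = a + t *\<^sub>R (b - a))"

definition af :: "(real^2) \<times> real \<Rightarrow> real^2 \<Rightarrow> real" where
  "af F x = fst F \<bullet> x + snd F"

definition good :: "real^2 \<Rightarrow> real^2 \<Rightarrow> real^2 \<Rightarrow> real^2 \<Rightarrow> bool" where
  "good a b c d \<longleftrightarrow> a \<noteq> b \<and> c \<noteq> d \<and> (\<exists>!x. x \<in> affine hull {a,b} \<inter> affine hull {c,d})"

lemma inner2: "(x::real^2) \<bullet> y = x$1 * y$1 + x$2 * y$2"
  by (simp add: inner_vec_def sum_2)

lemma onl_iff: "x \<in> affine hull {a,b} \<longleftrightarrow> onl x a b"
  unfolding affine_hull_2_alt onl_def by auto

lemma good_meet:
  assumes "good a b c d"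
  shows "onl (meet a b c d) a b" "onl (meet a b c d) c d"
proof -
  have "meet a b c d \<in> affine hull {a,b} \<inter> affine hull {c,d}"
    using assms unfolding good_def meet_def by (metis (no_types, lifting) theI')
  then show "onl (meet a b c d) a b" "onl (meet a b c d) c d" by (auto simp: onl_iff)
qed

lemma det2_par:
  assumes D: "det2 u v = 0" and v: "v \<noteq> 0"
  shows "\<exists>\<mu>. u = \<mu> *\<^sub>R v"
proof -
  have D': "u$1 * v$2 = u$2 * v$1" using D by (simp add: det2_def)
  show ?thesis
  proof (cases "v$1 = 0")
    case True
    have v2: "v$2 \<noteq> 0"
    proof
      assume "v$2 = 0"
      with True have "v = 0" by (simp add: vec_eq_iff forall_2)
      with v show False by simp
    qed
    have u1: "u$1 = 0" using D' True v2 by simp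
    have "u$1 = (u$2 / v$2) * v$1" "u$2 = (u$2 / v$2) * v$2" using u1 True v2 by simp_all
    then have "u = (u$2 / v$2) *\<^sub>R v" by (simp add: vec_eq_iff forall_2)
    then show ?thesis by blast
  next
    case False
    have "u$1 = (u$1 / v$1) * v$1" using False by simp
    moreover have "u$2 = (u$1 / v$1) * v$2"
    proof -
      have "u$2 * v$1 = u$1 * v$2" using D' by simp
      then show ?thesis using False by (simp add: field_simps)
    qed
    ultimately have "u = (u$1 / v$1) *\<^sub>R v" by (simp add: vec_eq_iff forall_2)
    then show ?thesis by blast
  qed
qed

lemma good_det:
  assumes "good a b c d"
  shows "det2 (b - a) (d - c) \<noteq> 0"
proof
  assume D: "det2 (b - a) (d - c) = 0"
  have ab: "a \<noteq> b" and cd: "c \<noteq> d" and U: "\<exists>!x. x \<in> affine hull {a,b} \<inter> affine hull {c,d}"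
    using assms by (auto simp: good_def)
  obtain x where x: "x \<in> affine hull {a,b} \<inter> affine hull {c,d}" using U by auto
  then have "onl x a b" "onl x c d" by (auto simp: onl_iff)
  then obtain s r where s: "x = a + s *\<^sub>R (b - a)" and r: "x = c + r *\<^sub>R (d - c)"
    unfolding onl_def by blast
  have "\<exists>\<mu>. b - a = \<mu> *\<^sub>R (d - c)"
    by (rule det2_par) (use D cd in auto)
  then obtain \<mu> where mu: "b - a = \<mu> *\<^sub>R (d - c)" by blast
  define y where "y = x + (b - a)"
  have "y = a + (s + 1) *\<^sub>R (b - a)" using s by (simp add: y_def algebra_simps)
  moreover have "y = c + (r + \<mu>) *\<^sub>R (d - c)" using r mu by (simp add: y_def algebra_simps)
  ultimately have "onl y a b" "onl y c d" unfolding onl_def by blast+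
  then have "y \<in> affine hull {a,b} \<inter> affine hull {c,d}"
    by (simp add: onl_iff)
  moreover have "y \<noteq> x" using ab by (simp add: y_def)
  ultimately show False using U x by blast
qed


lemma af_agree:
  assumes "onl x a b" "af F a = af G a" "af F b = af G b"
  shows "af F x = af G x"
proof -
  obtain t where t: "x = a + t *\<^sub>R (b - a)" using assms(1) by (auto simp: onl_def)
  have e: "\<And>H. af H x = af H a + t * (af H b - af H a)"
    unfolding t af_def by (simp add: inner_simps algebra_simps)
  show ?thesis using assms(2,3) by (simp add: e)
qed

lemma af_zero:
  assumes "det2 (b - a) (d - c) \<noteq> 0" "af F a = 0" "af F b = 0" "af F c = 0" "af F d = 0"
  shows "fst F = 0"
proof -
  have u: "fst F \<bullet> (b - a) = 0" and v: "fst F \<bullet> (d - c) = 0"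
    using assms(2-5) by (auto simp: af_def inner_simps)
  define W where "W = fst F"
  define p where "p = b - a"
  define q where "q = d - c"
  have u': "W$1 * p$1 + W$2 * p$2 = 0" using u by (simp add: W_def p_def inner2)
  have v': "W$1 * q$1 + W$2 * q$2 = 0" using v by (simp add: W_def q_def inner2)
  have D: "p$1 * q$2 - p$2 * q$1 \<noteq> 0" using assms(1) by (simp add: p_def q_def det2_def)
  have "W$1 * (p$1 * q$2 - p$2 * q$1) = q$2 * (W$1 * p$1 + W$2 * p$2) - p$2 * (W$1 * q$1 + W$2 * q$2)"
    by (simp add: algebra_simps)
  then have 1: "W$1 = 0" using u' v' D by simp
  have "W$2 * (p$1 * q$2 - p$2 * q$1) = p$1 * (W$1 * q$1 + W$2 * q$2) - q$1 * (W$1 * p$1 + W$2 * p$2)"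
    by (simp add: algebra_simps)
  then have 2: "W$2 = 0" using u' v' D by simp
  show ?thesis using 1 2 unfolding W_def by (simp add: vec_eq_iff forall_2)
qed

lemma af_ext:
  assumes D: "det2 (b - a) (d - c) \<noteq> 0"
    and s: "x0 = a + s *\<^sub>R (b - a)" and r: "x0 = c + r *\<^sub>R (d - c)"
    and cons: "\<alpha>a + s * (\<alpha>b - \<alpha>a) = \<beta>c + r * (\<beta>d - \<beta>c)"
  shows "\<exists>F. af F a = \<alpha>a \<and> af F b = \<alpha>b \<and> af F c = \<beta>c \<and> af F d = \<beta>d"
proof -
  define u where "u = b - a"
  define v where "v = d - c"
  define \<alpha> where "\<alpha> = \<alpha>b - \<alpha>a"
  define \<beta> where "\<beta> = \<beta>d - \<beta>c"
  define Dt where "Dt = det2 u v"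
  have Dt: "Dt \<noteq> 0" using D by (simp add: Dt_def u_def v_def)
  define W :: "real^2" where "W = vector [(\<alpha> * v$2 - \<beta> * u$2) / Dt, (\<beta> * u$1 - \<alpha> * v$1) / Dt]"
  have "W \<bullet> u = ((\<alpha> * v$2 - \<beta> * u$2) * u$1 + (\<beta> * u$1 - \<alpha> * v$1) * u$2) / Dt"
    by (simp add: W_def inner2 add_divide_distrib)
  also have "\<dots> = (\<alpha> * Dt) / Dt" by (simp add: Dt_def det2_def algebra_simps)
  finally have Wu: "W \<bullet> u = \<alpha>" using Dt by simp
  have "W \<bullet> v = ((\<alpha> * v$2 - \<beta> * u$2) * v$1 + (\<beta> * u$1 - \<alpha> * v$1) * v$2) / Dt"
    by (simp add: W_def inner2 add_divide_distrib)
  also have "\<dots> = (\<beta> * Dt) / Dt" by (simp add: Dt_def det2_def algebra_simps)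
  finally have Wv: "W \<bullet> v = \<beta>" using Dt by simp
  define F where "F = (W, \<alpha>a - W \<bullet> a)"
  have ca: "c - a = s *\<^sub>R u - r *\<^sub>R v" using s r by (simp add: u_def v_def algebra_simps)
  have Fa: "af F a = \<alpha>a" by (simp add: F_def af_def)
  have Fb: "af F b = \<alpha>b"
  proof -
    have "af F b = \<alpha>a + W \<bullet> u" by (simp add: F_def af_def u_def inner_simps)
    then show ?thesis using Wu by (simp add: \<alpha>_def)
  qed
  have Fc: "af F c = \<beta>c"
  proof -
    have "af F c = \<alpha>a + W \<bullet> (c - a)" by (simp add: F_def af_def inner_simps)
    also have "\<dots> = \<alpha>a + s * \<alpha> - r * \<beta>" using Wu Wv by (simp add: ca inner_simps)
    finally show ?thesis using cons by (simp add: \<alpha>_def \<beta>_def)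
  qed
  have Fd: "af F d = \<beta>d"
  proof -
    have "af F d = af F c + W \<bullet> v" by (simp add: F_def af_def v_def inner_simps)
    then show ?thesis using Wv Fc by (simp add: \<beta>_def)
  qed
  show ?thesis using Fa Fb Fc Fd by blast
qed

lemma af_collinear:
  assumes "fst F \<noteq> 0" "af F p1 = 0" "af F p2 = 0" "af F p3 = 0" "af F p4 = 0"
  shows "collinear {p1, p2, p3, p4}"
proof -
  define w where "w = fst F"
  define N where "N = w$1 * w$1 + w$2 * w$2"
  have N: "N \<noteq> 0" using assms(1) unfolding N_def w_def[symmetric]
    by (auto simp: vec_eq_iff forall_2 add_nonneg_eq_0_iff)
  define u :: "real^2" where "u = vector [- w$2, w$1]"
  have key: "\<exists>c. x - y = c *\<^sub>R u" if "af F x = 0" "af F y = 0" for x y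
  proof -
    define dd where "dd = x - y"
    have "w \<bullet> dd = 0" using that by (simp add: af_def w_def dd_def inner_simps)
    then have h: "w$1 * dd$1 + w$2 * dd$2 = 0" by (simp add: inner2)
    define m where "m = w$1 * dd$2 - w$2 * dd$1"
    have e1: "dd$1 * N + m * w$2 = w$1 * (w$1 * dd$1 + w$2 * dd$2)"
      by (simp add: N_def m_def algebra_simps)
    have e2: "dd$2 * N - m * w$1 = w$2 * (w$1 * dd$1 + w$2 * dd$2)"
      by (simp add: N_def m_def algebra_simps)
    have "dd$1 = (m / N) * (- w$2)"
    proof -
      have "dd$1 * N = - (m * w$2)" using e1 h by simp
      then show ?thesis using N by (simp add: field_simps)
    qed
    moreover have "dd$2 = (m / N) * w$1"
    proof -
      have "dd$2 * N = m * w$1" using e2 h by simp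
      then show ?thesis using N by (simp add: field_simps)
    qed
    ultimately have "dd = (m / N) *\<^sub>R u" by (simp add: vec_eq_iff forall_2 u_def)
    then show ?thesis unfolding dd_def by blast
  qed
  show ?thesis unfolding collinear_def using key assms(2-5) by blast
qed

lemma collinear_af:
  assumes "collinear {p1, p2, p3, p4 :: real^2}"
  shows "\<exists>F. fst F \<noteq> 0 \<and> af F p1 = 0 \<and> af F p2 = 0 \<and> af F p3 = 0 \<and> af F p4 = 0"
proof -
  obtain u where u: "\<And>x y. x \<in> {p1,p2,p3,p4} \<Longrightarrow> y \<in> {p1,p2,p3,p4} \<Longrightarrow> \<exists>c. x - y = c *\<^sub>R u"
    using assms unfolding collinear_def by blast
  show ?thesis
  proof (cases "u = 0")
    case True
    define w :: "real^2" where "w = vector [1, 0]"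
    have w: "w \<noteq> 0" by (simp add: w_def vec_eq_iff forall_2)
    have eq: "\<And>x. x \<in> {p1,p2,p3,p4} \<Longrightarrow> x = p1" using u True by (metis insertI1 eq_iff_diff_eq_0 scaleR_zero_right)
    have "af (w, - (w \<bullet> p1)) x = 0" if "x \<in> {p1,p2,p3,p4}" for x
      using eq[OF that] by (simp add: af_def)
    then have "af (w, - (w \<bullet> p1)) p1 = 0" "af (w, - (w \<bullet> p1)) p2 = 0"
      "af (w, - (w \<bullet> p1)) p3 = 0" "af (w, - (w \<bullet> p1)) p4 = 0" by auto
    then show ?thesis using w by (intro exI[of _ "(w, - (w \<bullet> p1))"]) simp
  next
    case False
    define w :: "real^2" where "w = vector [- u$2, u$1]"
    have w: "w \<noteq> 0" using False by (auto simp: w_def vec_eq_iff forall_2)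
    have wu: "w \<bullet> u = 0" by (simp add: w_def inner2)
    have key: "w \<bullet> x = w \<bullet> p1" if "x \<in> {p1,p2,p3,p4}" for x
    proof -
      have "p1 \<in> {p1,p2,p3,p4}" by simp
      from u[OF that this] obtain c where c: "x - p1 = c *\<^sub>R u" by blast
      have "w \<bullet> (x - p1) = c * (w \<bullet> u)" unfolding c by (rule inner_scaleR_right)
      then have "w \<bullet> (x - p1) = 0" using wu by simp
      then show ?thesis by (simp add: inner_diff_right)
    qed
    have "af (w, - (w \<bullet> p1)) p1 = 0" "af (w, - (w \<bullet> p1)) p2 = 0"
      "af (w, - (w \<bullet> p1)) p3 = 0" "af (w, - (w \<bullet> p1)) p4 = 0"
      using key[of p2] key[of p3] key[of p4] by (simp_all add: af_def)
    then show ?thesis using w by (intro exI[of _ "(w, - (w \<bullet> p1))"]) simp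
  qed
qed


lemma af_line_val:
  assumes "x = a + t *\<^sub>R (b - a)"
  shows "af F x = af F a + t * (af F b - af F a)"
  unfolding assms af_def by (simp add: inner_simps algebra_simps)

lemma good_onl_ex:
  assumes "good a b c d"
  obtains s r where "meet a b c d = a + s *\<^sub>R (b - a)" "meet a b c d = c + r *\<^sub>R (d - c)"
  using good_meet[OF assms] unfolding onl_def by blast

lemma face_fn:
  assumes g: "good a b c d" and z: "af G (meet a b c d) = 0"
  shows "\<exists>F. af F a = 0 \<and> af F b = 0 \<and> af F c = af G c \<and> af F d = af G d"
proof -
  obtain s r where s: "meet a b c d = a + s *\<^sub>R (b - a)" and r: "meet a b c d = c + r *\<^sub>R (d - c)"
    using good_onl_ex[OF g] by blast
  have "af G (meet a b c d) = af G c + r * (af G d - af G c)" by (rule af_line_val[OF r])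
  then have cons: "0 + s * (0 - 0) = af G c + r * (af G d - af G c)" using z by simp
  show ?thesis by (rule af_ext[OF good_det[OF g] s r cons])
qed

lemma GP_inst:
  assumes gp: "cube_general_position P"
    and as: "A \<subseteq> {1,2,3}" "m \<in> {1,2,3}" "k \<in> {1,2,3}" "m \<notin> A" "k \<notin> A" "m \<noteq> k"
  shows "good (P A) (P (insert m A)) (P (insert k A)) (P (insert k (insert m A)))"
proof -
  have d1: "\<forall>A m. A \<subseteq> {1,2,3} \<and> m \<in> {1,2,3} \<and> m \<notin> A \<longrightarrow> P A \<noteq> P (insert m A)"
    using gp unfolding cube_general_position_def by (rule conjunct1)
  have d2: "\<forall>A m k. A \<subseteq> {1,2,3} \<and> m \<in> {1,2,3} \<and> k \<in> {1,2,3} \<and> m \<notin> A \<and> k \<notin> A \<and> m \<noteq> k \<longrightarrow>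
        (\<exists>!x. x \<in> affine hull {P A, P (insert m A)} \<inter>
                affine hull {P (insert k A), P (insert k (insert m A))})"
    using gp unfolding cube_general_position_def by (rule conjunct2)
  have 1: "P A \<noteq> P (insert m A)" by (rule d1[rule_format]) (use as in blast)
  have "insert k A \<subseteq> {1,2,3}" "m \<notin> insert k A" using as by auto
  then have "P (insert k A) \<noteq> P (insert m (insert k A))"
    by (intro d1[rule_format]) (use as in blast)
  moreover have "insert m (insert k A) = insert k (insert m A)" by (rule insert_commute)
  ultimately have 2: "P (insert k A) \<noteq> P (insert k (insert m A))" by simp
  have 3: "\<exists>!x. x \<in> affine hull {P A, P (insert m A)} \<inter>
                affine hull {P (insert k A), P (insert k (insert m A))}"
    by (rule d2[rule_format]) (use as in blast)
  show ?thesis using 1 2 3 unfolding good_def by (intro conjI)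
qed

lemma af_diff: "af (fst F - fst H, snd F - snd H) x = af F x - af H x"
  by (simp add: af_def inner_diff_left)

lemma af_Z: "af (0, 0) x = 0"
  by (simp add: af_def)

lemma main_step:
  assumes gp: "cube_general_position P"
    and ijk: "i \<in> {1,2,3}" "j \<in> {1,2,3}" "k \<in> {1,2,3}" "i \<noteq> j" "i \<noteq> k" "j \<noteq> k"
    and col: "opp_faces_collinear P i j k"
  shows "opp_faces_collinear P j k i"
proof -
  have s1: "{j,i} = {i,j}" "{k,i} = {i,k}" "{k,j} = {j,k}" "{j,k,i} = {i,j,k}" "{k,i,j} = {i,j,k}"
    "{k,j,i} = {i,j,k}" "{j,i,k} = {i,j,k}" "{i,k,j} = {i,j,k}" by auto
  have gA: "good (P {}) (P {i}) (P {k}) (P {i,k})"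
    using GP_inst[OF gp, of "{}" i k] ijk by (simp add: s1)
  have gB: "good (P {i}) (P {i,j}) (P {i,k}) (P {i,j,k})"
    using GP_inst[OF gp, of "{i}" j k] ijk by (simp add: s1)
  have gC: "good (P {j}) (P {i,j}) (P {j,k}) (P {i,j,k})"
    using GP_inst[OF gp, of "{j}" i k] ijk by (simp add: s1)
  have gD: "good (P {}) (P {j}) (P {k}) (P {j,k})"
    using GP_inst[OF gp, of "{}" j k] ijk by (simp add: s1)
  have gA': "good (P {}) (P {j}) (P {i}) (P {i,j})"
    using GP_inst[OF gp, of "{}" j i] ijk by (simp add: s1)
  have gB': "good (P {j}) (P {j,k}) (P {i,j}) (P {i,j,k})"
    using GP_inst[OF gp, of "{j}" k i] ijk by (simp add: s1)
  have gC': "good (P {k}) (P {j,k}) (P {i,k}) (P {i,j,k})"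
    using GP_inst[OF gp, of "{k}" j i] ijk by (simp add: s1)
  have gD': "good (P {}) (P {k}) (P {i}) (P {i,k})"
    using GP_inst[OF gp, of "{}" k i] ijk by (simp add: s1)
  obtain G where G: "fst G \<noteq> 0"
    "af G (meet (P {}) (P {i}) (P {k}) (P {i,k})) = 0"
    "af G (meet (P {i}) (P {i,j}) (P {i,k}) (P {i,j,k})) = 0"
    "af G (meet (P {j}) (P {i,j}) (P {j,k}) (P {i,j,k})) = 0"
    "af G (meet (P {}) (P {j}) (P {k}) (P {j,k})) = 0"
    using collinear_af[OF col[unfolded opp_faces_collinear_def]] by blast
  obtain F0 where F0: "af F0 (P {}) = 0" "af F0 (P {j}) = 0"
    "af F0 (P {k}) = af G (P {k})" "af F0 (P {j,k}) = af G (P {j,k})"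
    using face_fn[OF gD G(5)] by blast
  obtain F1 where F1: "af F1 (P {i}) = 0" "af F1 (P {i,j}) = 0"
    "af F1 (P {i,k}) = af G (P {i,k})" "af F1 (P {i,j,k}) = af G (P {i,j,k})"
    using face_fn[OF gB G(3)] by blast
  obtain FT where FT: "af FT (P {j}) = 0" "af FT (P {i,j}) = 0"
    "af FT (P {j,k}) = af G (P {j,k})" "af FT (P {i,j,k}) = af G (P {i,j,k})"
    using face_fn[OF gC G(4)] by blast
  obtain FS where FS: "af FS (P {}) = 0" "af FS (P {i}) = 0"
    "af FS (P {k}) = af G (P {k})" "af FS (P {i,k}) = af G (P {i,k})"
    using face_fn[OF gA G(2)] by blast
  define A' where "A' = meet (P {}) (P {j}) (P {i}) (P {i,j})"
  define B' where "B' = meet (P {j}) (P {j,k}) (P {i,j}) (P {i,j,k})"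
  define C' where "C' = meet (P {k}) (P {j,k}) (P {i,k}) (P {i,j,k})"
  define D' where "D' = meet (P {}) (P {k}) (P {i}) (P {i,k})"
  have a0: "af F0 A' = af (0,0) A'"
    by (rule af_agree[OF good_meet(1)[OF gA', folded A'_def]]) (simp_all add: af_Z F0)
  have a1: "af F1 A' = af (0,0) A'"
    by (rule af_agree[OF good_meet(2)[OF gA', folded A'_def]]) (simp_all add: af_Z F1)
  have b0: "af F0 B' = af FT B'"
    by (rule af_agree[OF good_meet(1)[OF gB', folded B'_def]]) (simp_all add: F0 FT)
  have b1: "af F1 B' = af FT B'"
    by (rule af_agree[OF good_meet(2)[OF gB', folded B'_def]]) (simp_all add: F1 FT)
  have c0: "af F0 C' = af G C'"
    by (rule af_agree[OF good_meet(1)[OF gC', folded C'_def]]) (simp_all add: F0)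
  have c1: "af F1 C' = af G C'"
    by (rule af_agree[OF good_meet(2)[OF gC', folded C'_def]]) (simp_all add: F1)
  have d0: "af F0 D' = af FS D'"
    by (rule af_agree[OF good_meet(1)[OF gD', folded D'_def]]) (simp_all add: F0 FS)
  have d1: "af F1 D' = af FS D'"
    by (rule af_agree[OF good_meet(2)[OF gD', folded D'_def]]) (simp_all add: F1 FS)
  define Dl where "Dl = (fst F0 - fst F1, snd F0 - snd F1)"
  have Dl: "af Dl A' = 0" "af Dl B' = 0" "af Dl C' = 0" "af Dl D' = 0"
    unfolding Dl_def af_diff using a0 a1 b0 b1 c0 c1 d0 d1 af_Z by simp_all
  have "collinear {A', B', C', D'}"
  proof (cases "fst Dl = 0")
    case False
    then show ?thesis using af_collinear[OF False Dl] by simp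
  next
    case True
    then have fe: "fst F0 = fst F1" by (simp add: Dl_def)
    have "af Dl A' = snd F0 - snd F1" using True by (simp add: af_def Dl_def)
    then have "snd F0 = snd F1" using Dl(1) by simp
    then have FF: "F1 = F0" using fe by (simp add: prod_eq_iff)
    have "fst F0 = 0"
      by (rule af_zero[OF good_det[OF gA']]) (use F0 F1 FF in simp_all)
    moreover have "snd F0 = 0" using F0(1) calculation by (simp add: af_def)
    ultimately have z: "\<And>x. af F0 x = 0" by (simp add: af_def)
    have "fst G = 0"
      by (rule af_zero[OF good_det[OF gC']]) (use F0 F1 FF z in metis)+
    with G(1) show ?thesis by simp
  qed
  then show ?thesis unfolding opp_faces_collinear_def A'_def B'_def C'_def D'_def
    by (simp add: s1)
qed


lemma choose3:
  assumes "i' \<in> {i,j,k}" "j' \<in> {i,j,k}" "k' \<in> {i,j,k}" "i' \<noteq> j'" "i' \<noteq> k'" "j' \<noteq> k'"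
  shows "((i'=i \<and> j'=j) \<or> (i'=j \<and> j'=i)) \<and> k'=k \<or>
      ((i'=j \<and> j'=k) \<or> (i'=k \<and> j'=j)) \<and> k'=i \<or>
      ((i'=i \<and> j'=k) \<or> (i'=k \<and> j'=i)) \<and> k'=j"
  using assms by auto

lemma opp_sym: "opp_faces_collinear P i j k = opp_faces_collinear P j i k"
proof -
  have e: "{j,i} = {i,j}" "{j,i,k} = {i,j,k}" by auto
  show ?thesis unfolding opp_faces_collinear_def e by (simp add: insert_commute)
qed

lemma perm3:
  assumes "{i, j, k} = {1, 2, 3::nat}"
  shows "i \<in> {1,2,3}" "j \<in> {1,2,3}" "k \<in> {1,2,3}" "i \<noteq> j" "i \<noteq> k" "j \<noteq> k"
proof -
  have m: "i \<in> {1,2,3}" "j \<in> {1,2,3}" "k \<in> {1,2,3}" using assms by blast+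
  have c: "1 \<in> {i,j,k}" "2 \<in> {i,j,k}" "3 \<in> {i,j,k}" using assms by blast+
  show "i \<in> {1,2,3}" "j \<in> {1,2,3}" "k \<in> {1,2,3}" by (fact m)+
  have c': "1 = i \<or> 1 = j \<or> 1 = k" "2 = i \<or> 2 = j \<or> 2 = k" "3 = i \<or> 3 = j \<or> 3 = k"
    using c by simp_all
  show "i \<noteq> j" "i \<noteq> k" "j \<noteq> k" using c' by arith+
qed

theorem theorem3:
  fixes P :: "nat set \<Rightarrow> real ^ 2"
    and i j k i' j' k' :: nat
  assumes "cube_general_position P"
    and "{i, j, k} = {1, 2, 3}"
    and "{i', j', k'} = {1, 2, 3}"
    and "opp_faces_collinear P i j k"
  shows "opp_faces_collinear P i' j' k'"
proof -
  note p = perm3[OF assms(2)]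
  note q = perm3[OF assms(3)]
  have st1: "opp_faces_collinear P j k i" by (rule main_step[OF assms(1) p assms(4)])
  have h2: "opp_faces_collinear P j i k" using assms(4) opp_sym by blast
  have st2: "opp_faces_collinear P i k j"
    by (rule main_step[OF assms(1) p(2) p(1) p(3)]) (use p h2 in auto)
  have cases: "((i'=i \<and> j'=j) \<or> (i'=j \<and> j'=i)) \<and> k'=k \<or>
      ((i'=j \<and> j'=k) \<or> (i'=k \<and> j'=j)) \<and> k'=i \<or>
      ((i'=i \<and> j'=k) \<or> (i'=k \<and> j'=i)) \<and> k'=j"
  proof (rule choose3)
    show "i' \<in> {i,j,k}" "j' \<in> {i,j,k}" "k' \<in> {i,j,k}" using assms(2,3) by blast+
  qed (use q in blast)+
  then show ?thesis using assms(4) st1 st2 opp_sym by metis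
qed

end
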